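(* Let $p$ be a prime, let $\mathcal{F}$ be a fusion system (not necessarily saturated) on a finite $p$-group $S$, and let $\mathcal{H}$ be a collection of subgroups of $S$ which is closed under $\mathcal{F}$-conjugation and under taking subgroups. Let $X_0$ be a virtual $S$-set with rational coefficients such that $|X_0^P|=|X_0^{P'}|$ for all $P,P'\le S$ with $P,P'\notin\mathcal{H}$ that are $\mathcal{F}$-conjugate. Then there exists a virtual $S$-set $X$ with rational coefficients such that: (a) $|X^P|=|X^{P'}|$ for all $\mathcal{F}$-conjugate $P,P'\le S$; (b) $|X^P|=|X_0^P|$ for all $P\le S$ with $P\notin\mathcal{H}$; and (c) $X-X_0$ is a virtual $S$-set with nonnegative rational coefficients.
   Context: A fusion system $\mathcal{F}$ on a finite $p$-group $S$ is a category whose objects are the subgroups of $S$, whose morphism sets $\mathrm{Hom}_{\mathcal{F}}(P,Q)$ are sets of injective group homomorphisms $P\to Q$, such that every map $u\mapsto sus^{-1}$ ($s\in S$, $sPs^{-1}\le Q$) lies in $\mathrm{Hom}_{\mathcal{F}}(P,Q)$, and every $\varphi\in\mathrm{Hom}_{\mathcal{F}}(P,Q)$ induces an isomorphism $P\to\varphi(P)$ in $\mathcal{F}$ whose inverse is also in $\mathcal{F}$; no saturation is assumed. Subgroups $P,P'\le S$ are $\mathcal{F}$-conjugate if there is an isomorphism $P\to P'$ in $\mathcal{F}$. A virtual $S$-set with rational coefficients is an element $\sum_H c_H\, S/H$ of $\mathbb{Q}\otimes_{\mathbb{Z}}B(S)$, where $H$ runs over representatives of $S$-conjugacy classes of subgroups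 of $S$ and $c_H\in\mathbb{Q}$; it has nonnegative rational coefficients if all $c_H\ge 0$. For such $X=\sum_H c_H\,S/H$ and $P\le S$, $|X^P|$ denotes $\sum_H c_H\,|(S/H)^P|$, where $(S/H)^P$ is the set of $P$-fixed points of the $S$-set $S/H$. *)

theory Defs
  imports Complex_Main "HOL-Algebra.Coset" "HOL-Computational_Algebra.Primes"
begin

definition finite_p_group :: "('a, 'b) monoid_scheme \<Rightarrow> nat \<Rightarrow> bool" where
  "finite_p_group S p \<longleftrightarrow> group S \<and> prime p \<and> finite (carrier S) \<and>
     (\<exists>n. card (carrier S) = p ^ n)"

definition conj_map :: "('a, 'b) monoid_scheme \<Rightarrow> 'a \<Rightarrow> 'a set \<Rightarrow> 'a \<Rightarrow> 'a" where
  "conj_map S s P = restrict (\<lambda>u. s \<otimes>\<^bsub>S\<^esub> u \<otimes>\<^bsub>S\<^esub> inv\<^bsub>S\<^esub> s) P"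

text \<open>A (not necessarily saturated) fusion system on S: F P Q is the set of morphisms
  P \<rightarrow> Q, represented as functions extensional on P.\<close>
definition fusion_system ::
  "('a, 'b) monoid_scheme \<Rightarrow> ('a set \<Rightarrow> 'a set \<Rightarrow> ('a \<Rightarrow> 'a) set) \<Rightarrow> bool" where
  "fusion_system S F \<longleftrightarrow>
     (\<forall>P Q \<phi>. \<phi> \<in> F P Q \<longrightarrow>
        subgroup P S \<and> subgroup Q S \<and> \<phi> \<in> extensional P \<and> inj_on \<phi> P \<and>
        \<phi> \<in> hom (S\<lparr>carrier := P\<rparr>) (S\<lparr>carrier := Q\<rparr>)) \<and>
     (\<forall>P Q R \<phi> \<psi>. \<phi> \<in> F P Q \<longrightarrow> \<psi> \<in> F Q R \<longrightarrow> restrict (\<psi> \<circ> \<phi>) P \<in> F P R) \<and>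
     (\<forall>P Q s. subgroup P S \<longrightarrow> subgroup Q S \<longrightarrow> s \<in> carrier S \<longrightarrow>
        (\<lambda>u. s \<otimes>\<^bsub>S\<^esub> u \<otimes>\<^bsub>S\<^esub> inv\<^bsub>S\<^esub> s) ` P \<subseteq> Q \<longrightarrow> conj_map S s P \<in> F P Q) \<and>
     (\<forall>P Q \<phi>. \<phi> \<in> F P Q \<longrightarrow>
        \<phi> \<in> F P (\<phi> ` P) \<and> restrict (inv_into P \<phi>) (\<phi> ` P) \<in> F (\<phi> ` P) P)"

definition F_conjugate ::
  "('a set \<Rightarrow> 'a set \<Rightarrow> ('a \<Rightarrow> 'a) set) \<Rightarrow> 'a set \<Rightarrow> 'a set \<Rightarrow> bool" where
  "F_conjugate F P P' \<longleftrightarrow> (\<exists>\<phi> \<in> F P P'. \<phi> ` P = P')"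

definition coset_space :: "('a, 'b) monoid_scheme \<Rightarrow> 'a set \<Rightarrow> 'a set set" where
  "coset_space S H = {g <#\<^bsub>S\<^esub> H | g. g \<in> carrier S}"

definition fixed_cosets :: "('a, 'b) monoid_scheme \<Rightarrow> 'a set \<Rightarrow> 'a set \<Rightarrow> 'a set set" where
  "fixed_cosets S H P = {C \<in> coset_space S H. \<forall>u \<in> P. u <#\<^bsub>S\<^esub> C = C}"

text \<open>A virtual S-set with rational coefficients is encoded by a function c on subgroups,
  standing for \<Sum>_{H \<le> S} c(H) [S/H]. Its coefficient at the S-conjugacy class of H
  (in the usual basis of representatives) is the sum of c over that class.\<close>
definition subgroups_of :: "('a, 'b) monoid_scheme \<Rightarrow> 'a set set" where
  "subgroups_of S = {H. subgroup H S}"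

definition S_conj_class :: "('a, 'b) monoid_scheme \<Rightarrow> 'a set \<Rightarrow> 'a set set" where
  "S_conj_class S H = {(\<lambda>u. g \<otimes>\<^bsub>S\<^esub> u \<otimes>\<^bsub>S\<^esub> inv\<^bsub>S\<^esub> g) ` H | g. g \<in> carrier S}"

definition vcoeff :: "('a, 'b) monoid_scheme \<Rightarrow> ('a set \<Rightarrow> rat) \<Rightarrow> 'a set \<Rightarrow> rat" where
  "vcoeff S c H = (\<Sum>K \<in> S_conj_class S H. c K)"

definition vmark :: "('a, 'b) monoid_scheme \<Rightarrow> ('a set \<Rightarrow> rat) \<Rightarrow> 'a set \<Rightarrow> rat" where
  "vmark S c P = (\<Sum>H \<in> subgroups_of S. c H * of_nat (card (fixed_cosets S H P)))"

definition nonneg_virtual :: "('a, 'b) monoid_scheme \<Rightarrow> ('a set \<Rightarrow> rat) \<Rightarrow> bool" where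
  "nonneg_virtual S c \<longleftrightarrow> (\<forall>H. subgroup H S \<longrightarrow> vcoeff S c H \<ge> 0)"

end

theory Submission
  imports Defs
begin

definition cjs :: "('a, 'b) monoid_scheme \<Rightarrow> 'a \<Rightarrow> 'a set \<Rightarrow> 'a set" where
  "cjs S g P = (\<lambda>u. g \<otimes>\<^bsub>S\<^esub> u \<otimes>\<^bsub>S\<^esub> inv\<^bsub>S\<^esub> g) ` P"

context group begin

lemma inv_cancel_l [simp]: "x \<in> carrier G \<Longrightarrow> y \<in> carrier G \<Longrightarrow> inv x \<otimes> (x \<otimes> y) = y"
  by (simp add: m_assoc[symmetric])

lemma inv_cancel_l2 [simp]: "x \<in> carrier G \<Longrightarrow> y \<in> carrier G \<Longrightarrow> x \<otimes> (inv x \<otimes> y) = y"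
  by (simp add: m_assoc[symmetric])

lemma cjs_comp:
  assumes "g \<in> carrier G" "h \<in> carrier G" "P \<subseteq> carrier G"
  shows "cjs G g (cjs G h P) = cjs G (g \<otimes> h) P"
  unfolding cjs_def image_image
proof (rule image_cong[OF refl])
  fix u assume "u \<in> P"
  then have u: "u \<in> carrier G" using assms by auto
  show "g \<otimes> (h \<otimes> u \<otimes> inv h) \<otimes> inv g = g \<otimes> h \<otimes> u \<otimes> inv (g \<otimes> h)"
    using assms u by (simp add: inv_mult_group m_assoc)
qed

lemma cjs_one: "P \<subseteq> carrier G \<Longrightarrow> cjs G \<one> P = P"
  unfolding cjs_def by (auto simp: subset_eq image_iff)

lemma cjs_inv_cancel:
  assumes "g \<in> carrier G" "P \<subseteq> carrier G"
  shows "cjs G (inv g) (cjs G g P) = P"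
  using assms by (simp add: cjs_comp cjs_one)

lemma cjs_subset: "g \<in> carrier G \<Longrightarrow> P \<subseteq> carrier G \<Longrightarrow> cjs G g P \<subseteq> carrier G"
  unfolding cjs_def by auto

lemma cjs_card:
  assumes "g \<in> carrier G" "P \<subseteq> carrier G"
  shows "card (cjs G g P) = card P"
  unfolding cjs_def
proof (rule card_image)
  show "inj_on (\<lambda>u. g \<otimes> u \<otimes> inv g) P"
    using assms by (auto simp: inj_on_def subset_eq)
qed

lemma cjs_subgroup:
  assumes "g \<in> carrier G" "subgroup P G"
  shows "subgroup (cjs G g P) G"
proof (rule subgroupI)
  have Pc: "P \<subseteq> carrier G" using assms subgroup.subset by blast
  show "cjs G g P \<subseteq> carrier G" using cjs_subset assms Pc by blast
  show "cjs G g P \<noteq> {}" using subgroup.one_closed[OF assms(2)] unfolding cjs_def by blast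
  fix a b assume a: "a \<in> cjs G g P" and b: "b \<in> cjs G g P"
  from a obtain u where u: "u \<in> P" "a = g \<otimes> u \<otimes> inv g" unfolding cjs_def by blast
  from b obtain v where v: "v \<in> P" "b = g \<otimes> v \<otimes> inv g" unfolding cjs_def by blast
  have uc: "u \<in> carrier G" "v \<in> carrier G" using u v Pc by auto
  have "inv a = g \<otimes> inv u \<otimes> inv g"
    using u uc assms(1) by (simp add: inv_mult_group m_assoc)
  moreover have "inv u \<in> P" using u subgroup.m_inv_closed[OF assms(2)] by blast
  ultimately show "inv a \<in> cjs G g P" unfolding cjs_def by blast
  have "a \<otimes> b = g \<otimes> (u \<otimes> v) \<otimes> inv g"
    using u v uc assms(1) by (simp add: m_assoc)
  moreover have "u \<otimes> v \<in> P" using u v subgroup.m_closed[OF assms(2)] by blast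
  ultimately show "a \<otimes> b \<in> cjs G g P" unfolding cjs_def by blast
qed

lemma finite_coset_space:
  assumes "finite (carrier G)" "H \<subseteq> carrier G"
  shows "finite (coset_space G H)"
proof -
  have "coset_space G H \<subseteq> Pow (carrier G)"
    unfolding coset_space_def using l_coset_subset_G assms by auto
  then show ?thesis using assms finite_subset by blast
qed

lemma finite_fixed_cosets:
  assumes "finite (carrier G)" "H \<subseteq> carrier G"
  shows "finite (fixed_cosets G H P)"
  using finite_coset_space[OF assms] unfolding fixed_cosets_def by auto

lemma fixed_cosets_self_pos:
  assumes "finite (carrier G)" "subgroup P G"
  shows "card (fixed_cosets G P P) > 0"
proof -
  have Pc: "P \<subseteq> carrier G" using assms subgroup.subset by blast
  have "P \<in> fixed_cosets G P P"
  proof -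
    have "\<one> <# P = P" using lcos_mult_one Pc by blast
    then have "P \<in> coset_space G P" unfolding coset_space_def by force
    moreover have "\<forall>u\<in>P. u <# P = P"
    proof
      fix u assume "u \<in> P"
      then have "u \<in> \<one> <# P" using lcos_mult_one Pc by simp
      then have "\<one> <# P = u <# P" using l_repr_independence[OF _ one_closed assms(2)] by blast
      then show "u <# P = P" using lcos_mult_one Pc by simp
    qed
    ultimately show ?thesis unfolding fixed_cosets_def by blast
  qed
  then show ?thesis using finite_fixed_cosets[OF assms(1) Pc] card_gt_0_iff by blast
qed

lemma fixed_cosets_conj:
  assumes fin: "finite (carrier G)" and H: "subgroup H G" and g: "g \<in> carrier G"
    and Pc: "P \<subseteq> carrier G"
  shows "card (fixed_cosets G H P) \<le> card (fixed_cosets G H (cjs G g P))"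
proof -
  have Hc: "H \<subseteq> carrier G" using H subgroup.subset by blast
  have map: "g <# C \<in> fixed_cosets G H (cjs G g P)" if C: "C \<in> fixed_cosets G H P" for C
  proof -
    from C obtain a where a: "a \<in> carrier G" "C = a <# H" and fx: "\<forall>u\<in>P. u <# C = C"
      unfolding fixed_cosets_def coset_space_def by blast
    have Cc: "C \<subseteq> carrier G" using a l_coset_subset_G Hc by simp
    have "g <# C = (g \<otimes> a) <# H" using a lcos_m_assoc Hc g by simp
    then have "g <# C \<in> coset_space G H" unfolding coset_space_def using a g by blast
    moreover have "w <# (g <# C) = g <# C" if w: "w \<in> cjs G g P" for w
    proof -
      from w obtain u where u: "u \<in> P" "w = g \<otimes> u \<otimes> inv g" unfolding cjs_def by blast
      have uc: "u \<in> carrier G" using u Pc by auto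
      have "w <# (g <# C) = (w \<otimes> g) <# C" using lcos_m_assoc Cc g u uc by simp
      also have "w \<otimes> g = g \<otimes> u" using u uc g by (simp add: m_assoc)
      also have "(g \<otimes> u) <# C = g <# (u <# C)" using lcos_m_assoc Cc g uc by simp
      also have "u <# C = C" using fx u by blast
      finally show ?thesis .
    qed
    ultimately show ?thesis unfolding fixed_cosets_def by blast
  qed
  have inj: "inj_on (\<lambda>C. g <# C) (fixed_cosets G H P)"
  proof (rule inj_onI)
    fix C D assume C: "C \<in> fixed_cosets G H P" and D: "D \<in> fixed_cosets G H P"
      and eq: "g <# C = g <# D"
    have "C \<subseteq> carrier G" "D \<subseteq> carrier G"
      using C D l_coset_subset_G Hc unfolding fixed_cosets_def coset_space_def by auto
    then have "inv g <# (g <# C) = C" "inv g <# (g <# D) = D"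
      using lcos_m_assoc g lcos_mult_one by auto
    then show "C = D" using eq by metis
  qed
  show ?thesis
    by (rule card_inj_on_le[OF inj]) (use map finite_fixed_cosets[OF fin] Hc in auto)
qed

lemma fixed_cosets_conj_eq:
  assumes fin: "finite (carrier G)" and H: "subgroup H G" and g: "g \<in> carrier G"
    and Pc: "P \<subseteq> carrier G"
  shows "card (fixed_cosets G H (cjs G g P)) = card (fixed_cosets G H P)"
proof -
  have "card (fixed_cosets G H (cjs G g P)) \<le> card (fixed_cosets G H (cjs G (inv g) (cjs G g P)))"
    using fixed_cosets_conj[OF fin H _ cjs_subset[OF g Pc], of "inv g"] g by simp
  also have "\<dots> = card (fixed_cosets G H P)" using cjs_inv_cancel g Pc by simp
  finally show ?thesis using fixed_cosets_conj[OF fin H g Pc] by simp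
qed

lemma fixed_cosets_nonempty:
  assumes H: "subgroup H G" and Pc: "P \<subseteq> carrier G" and ne: "fixed_cosets G H P \<noteq> {}"
  shows "\<exists>x\<in>carrier G. cjs G (inv x) P \<subseteq> H"
proof -
  have Hc: "H \<subseteq> carrier G" using H subgroup.subset by blast
  from ne obtain C where C: "C \<in> fixed_cosets G H P" by blast
  from C obtain a where a: "a \<in> carrier G" "C = a <# H" and fx: "\<forall>u\<in>P. u <# C = C"
    unfolding fixed_cosets_def coset_space_def by blast
  have "inv a \<otimes> u \<otimes> a \<in> H" if u: "u \<in> P" for u
  proof -
    have uc: "u \<in> carrier G" using u Pc by auto
    have "u <# (a <# H) = (u \<otimes> a) <# H" using lcos_m_assoc Hc uc a by blast
    then have "(u \<otimes> a) <# H = a <# H" using fx u a by simp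
    moreover have "u \<otimes> a \<in> (u \<otimes> a) <# H"
      using subgroup.one_closed[OF H] unfolding l_coset_def using uc a by force
    ultimately have "u \<otimes> a \<in> a <# H" by simp
    then obtain h where h: "h \<in> H" "u \<otimes> a = a \<otimes> h" unfolding l_coset_def by blast
    have hc: "h \<in> carrier G" using h Hc by auto
    have "inv a \<otimes> u \<otimes> a = inv a \<otimes> (u \<otimes> a)" using a uc by (simp add: m_assoc)
    also have "\<dots> = h" using h a hc by (simp add: m_assoc[symmetric])
    finally show ?thesis using h by simp
  qed
  then have "cjs G (inv a) P \<subseteq> H" unfolding cjs_def using a by auto
  then show ?thesis using a by blast
qed

end

theorem lemma3:
  fixes S :: "('a, 'b) monoid_scheme" and p :: nat
    and F :: "'a set \<Rightarrow> 'a set \<Rightarrow> ('a \<Rightarrow> 'a) set"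
    and \<H> :: "'a set set" and X0 :: "'a set \<Rightarrow> rat"
  assumes "finite_p_group S p"
    and "fusion_system S F"
    and "\<forall>P \<in> \<H>. subgroup P S"
    and "\<forall>P \<in> \<H>. \<forall>Q. subgroup Q S \<longrightarrow> Q \<subseteq> P \<longrightarrow> Q \<in> \<H>"
    and "\<forall>P \<in> \<H>. \<forall>P'. F_conjugate F P P' \<longrightarrow> P' \<in> \<H>"
    and "\<forall>P P'. subgroup P S \<longrightarrow> subgroup P' S \<longrightarrow> P \<notin> \<H> \<longrightarrow> P' \<notin> \<H> \<longrightarrow>
           F_conjugate F P P' \<longrightarrow> vmark S X0 P = vmark S X0 P'"
  shows "\<exists>X :: 'a set \<Rightarrow> rat.
           (\<forall>P P'. subgroup P S \<longrightarrow> subgroup P' S \<longrightarrow> F_conjugate F P P' \<longrightarrow>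
              vmark S X P = vmark S X P') \<and>
           (\<forall>P. subgroup P S \<longrightarrow> P \<notin> \<H> \<longrightarrow> vmark S X P = vmark S X0 P) \<and>
           nonneg_virtual S (\<lambda>H. X H - X0 H)"
proof -
  have grp: "group S" and fin: "finite (carrier S)"
    using assms(1) unfolding finite_p_group_def by auto
  interpret group S by (rule grp)
  note fs = assms(2)[unfolded fusion_system_def]
  note fs1 = fs[THEN conjunct1, rule_format]
  note fs3 = fs[THEN conjunct2, THEN conjunct2, THEN conjunct1, rule_format]
  note fs4 = fs[THEN conjunct2, THEN conjunct2, THEN conjunct2, rule_format]
  have Fsub: "subgroup P S \<and> subgroup Q S \<and> inj_on \<phi> P" if "\<phi> \<in> F P Q" for P Q \<phi>
    using fs1[OF that] by blast
  have Fconj: "F_conjugate F P (cjs S g P)" if P: "subgroup P S" and g: "g \<in> carrier S" for P g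
  proof -
    have "conj_map S g P \<in> F P (cjs S g P)"
      using fs3[OF P cjs_subgroup[OF g P] g] unfolding cjs_def by blast
    moreover have "conj_map S g P ` P = cjs S g P"
      unfolding conj_map_def cjs_def by auto
    ultimately show ?thesis unfolding F_conjugate_def by blast
  qed
  have Fsym: "F_conjugate F Q P" if "F_conjugate F P Q" for P Q
  proof -
    from that obtain \<phi> where \<phi>: "\<phi> \<in> F P Q" "\<phi> ` P = Q" unfolding F_conjugate_def by blast
    have inj: "inj_on \<phi> P" using Fsub \<phi>(1) by blast
    have "restrict (inv_into P \<phi>) (\<phi> ` P) \<in> F (\<phi> ` P) P" using fs4[OF \<phi>(1)] by blast
    moreover have "restrict (inv_into P \<phi>) (\<phi> ` P) ` (\<phi> ` P) = P"
      using inv_into_image_cancel[OF inj] by simp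
    ultimately show ?thesis unfolding F_conjugate_def using \<phi>(2) by blast
  qed
  have Fcard: "card Q = card P" if "F_conjugate F P Q" for P Q
  proof -
    from that obtain \<phi> where \<phi>: "\<phi> \<in> F P Q" "\<phi> ` P = Q" unfolding F_conjugate_def by blast
    then show ?thesis using Fsub card_image by metis
  qed
  have Fsubg: "subgroup P S \<and> subgroup Q S" if "F_conjugate F P Q" for P Q
    using that Fsub unfolding F_conjugate_def by blast
  have subH: "subgroup P S" if "P \<in> \<H>" for P using assms(3) that by blast
  have subc: "P \<subseteq> carrier S" if "subgroup P S" for P using that subgroup.subset by blast
  have fin_sg: "finite (subgroups_of S)"
  proof -
    have "subgroups_of S \<subseteq> Pow (carrier S)" unfolding subgroups_of_def using subc by auto
    then show ?thesis using fin finite_subset by blast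
  qed
  have mark_conj: "vmark S c (cjs S g P) = vmark S c P" if "subgroup P S" "g \<in> carrier S" for c P g
    unfolding vmark_def
    by (rule sum.cong[OF refl]) (simp add: subgroups_of_def fixed_cosets_conj_eq[OF fin _ that(2) subc[OF that(1)]])
  have scl: "S_conj_class S H = {cjs S g H | g. g \<in> carrier S}" for H
    by (simp add: S_conj_class_def cjs_def)
  define Good where "Good k \<longleftrightarrow> (\<exists>X. (\<forall>H. X0 H \<le> X H) \<and>
      (\<forall>P. subgroup P S \<longrightarrow> P \<notin> \<H> \<longrightarrow> vmark S X P = vmark S X0 P) \<and>
      (\<forall>P P'. F_conjugate F P P' \<longrightarrow> P \<in> \<H> \<longrightarrow> k \<le> card P \<longrightarrow> vmark S X P = vmark S X P'))" for k
  have step: "Good k" if "Good (Suc k)" for k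
  proof -
    from that obtain X where X1: "\<forall>H. X0 H \<le> X H"
      and X2: "\<forall>P. subgroup P S \<longrightarrow> P \<notin> \<H> \<longrightarrow> vmark S X P = vmark S X0 P"
      and X3: "\<forall>P P'. F_conjugate F P P' \<longrightarrow> P \<in> \<H> \<longrightarrow> Suc k \<le> card P \<longrightarrow> vmark S X P = vmark S X P'"
      unfolding Good_def by blast
    define E where "E = (symclp (F_conjugate F))\<^sup>*\<^sup>*"
    define t where "t Q = Max ((\<lambda>R. vmark S X R) ` {R. E Q R})" for Q
    define y where "y Q = (if Q \<in> \<H> \<and> card Q = k then (t Q - vmark S X Q) /
        (of_nat (card (fixed_cosets S Q Q)) * of_nat (card (S_conj_class S Q))) else 0)" for Q
    define X' where "X' Q = X Q + y Q" for Q
    have Esub: "subgroup R S" if "E Q R" "subgroup Q S" for Q R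
      using that(1) unfolding E_def
    proof (induction rule: rtranclp_induct)
      case base then show ?case using that(2) by simp
    next
      case (step A B) then show ?case using Fsubg unfolding symclp_def by blast
    qed
    have Efin: "finite {R. E Q R}" if "subgroup Q S" for Q
      using Esub[OF _ that] fin_sg unfolding subgroups_of_def
      by (metis (no_types, lifting) mem_Collect_eq rev_finite_subset subsetI)
    have t_ge: "vmark S X Q \<le> t Q" if "subgroup Q S" for Q
      unfolding t_def using Efin[OF that] by (intro Max_ge) (auto simp: E_def)
    have t_E: "t Q = t R" if "E Q R" for Q R
    proof -
      have "E R Q" using that unfolding E_def by (rule rtranclp_symclp_sym)
      then have "{Z. E Q Z} = {Z. E R Z}" using that unfolding E_def
        by (auto intro: rtranclp_trans)
      then show ?thesis unfolding t_def by simp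
    qed
    have y_nn: "0 \<le> y Q" for Q
      using t_ge[OF subH] unfolding y_def by (auto intro!: divide_nonneg_nonneg)
    have vm_add: "vmark S X' P = vmark S X P + vmark S y P" for P
      unfolding vmark_def X'_def by (simp add: distrib_right sum.distrib)
    have conj_back: "P = cjs S x (cjs S (inv\<^bsub>S\<^esub> x) P)" if "subgroup P S" "x \<in> carrier S" for P x
      using cjs_inv_cancel[of "inv\<^bsub>S\<^esub> x" P] that subc by simp
    have ya: "vmark S y P = 0" if P: "subgroup P S" "P \<notin> \<H>" for P
      unfolding vmark_def
    proof (rule sum.neutral, rule ballI)
      fix Q assume "Q \<in> subgroups_of S"
      show "y Q * of_nat (card (fixed_cosets S Q P)) = 0"
      proof (cases "Q \<in> \<H> \<and> fixed_cosets S Q P \<noteq> {}")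
        case True
        then obtain x where x: "x \<in> carrier S" "cjs S (inv\<^bsub>S\<^esub> x) P \<subseteq> Q"
          using fixed_cosets_nonempty[OF subH subc[OF P(1)]] by blast
        have Rs: "subgroup (cjs S (inv\<^bsub>S\<^esub> x) P) S" using cjs_subgroup x P by simp
        then have "cjs S (inv\<^bsub>S\<^esub> x) P \<in> \<H>" using assms(4) True x by blast
        moreover have "F_conjugate F (cjs S (inv\<^bsub>S\<^esub> x) P) P"
          using Fconj[OF Rs x(1)] conj_back[OF P(1) x(1)] by simp
        ultimately have False using assms(5) P by blast
        then show ?thesis ..
      next
        case False then show ?thesis unfolding y_def by auto
      qed
    qed
    have yb: "vmark S y P = 0" if P: "subgroup P S" "k < card P" for P
      unfolding vmark_def
    proof (rule sum.neutral, rule ballI)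
      fix Q assume "Q \<in> subgroups_of S"
      show "y Q * of_nat (card (fixed_cosets S Q P)) = 0"
      proof (cases "Q \<in> \<H> \<and> card Q = k \<and> fixed_cosets S Q P \<noteq> {}")
        case True
        then obtain x where x: "x \<in> carrier S" "cjs S (inv\<^bsub>S\<^esub> x) P \<subseteq> Q"
          using fixed_cosets_nonempty[OF subH subc[OF P(1)]] by blast
        have "card (cjs S (inv\<^bsub>S\<^esub> x) P) \<le> card Q"
          using card_mono[OF finite_subset[OF subc[OF subH] fin] x(2)] True by blast
        then have False using cjs_card[of "inv\<^bsub>S\<^esub> x" P] x P subc True by simp
        then show ?thesis ..
      next
        case False then show ?thesis unfolding y_def by auto
      qed
    qed
    have yc: "vmark S y P = t P - vmark S X P" if P: "subgroup P S" "P \<in> \<H>" "card P = k" for P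
    proof -
      let ?C = "S_conj_class S P"
      let ?v = "(t P - vmark S X P) / of_nat (card ?C)"
      have Csub: "?C \<subseteq> subgroups_of S"
        unfolding scl subgroups_of_def using cjs_subgroup P by auto
      have Cfin: "finite ?C" using Csub fin_sg finite_subset by blast
      have "P \<in> ?C" unfolding scl using cjs_one[OF subc[OF P(1)]] by force
      then have Cpos: "card ?C > 0" using Cfin card_gt_0_iff by blast
      have "vmark S y P = (\<Sum>Q\<in>?C. y Q * of_nat (card (fixed_cosets S Q P)))"
        unfolding vmark_def
      proof (rule sum.mono_neutral_right[OF fin_sg Csub], rule ballI)
        fix Q assume Q: "Q \<in> subgroups_of S - ?C"
        show "y Q * of_nat (card (fixed_cosets S Q P)) = 0"
        proof (cases "Q \<in> \<H> \<and> card Q = k \<and> fixed_cosets S Q P \<noteq> {}")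
          case True
          then obtain x where x: "x \<in> carrier S" "cjs S (inv\<^bsub>S\<^esub> x) P \<subseteq> Q"
            using fixed_cosets_nonempty[OF subH subc[OF P(1)]] by blast
          have "card (cjs S (inv\<^bsub>S\<^esub> x) P) = card Q"
            using cjs_card[of "inv\<^bsub>S\<^esub> x" P] x P subc True by simp
          then have "cjs S (inv\<^bsub>S\<^esub> x) P = Q"
            using card_subset_eq[OF finite_subset[OF subc[OF subH] fin] x(2)] True by blast
          then have "Q \<in> ?C" unfolding scl using x by blast
          then show ?thesis using Q by blast
        next
          case False then show ?thesis unfolding y_def by auto
        qed
      qed
      also have "\<dots> = (\<Sum>Q\<in>?C. ?v)"
      proof (rule sum.cong[OF refl])
        fix Q assume "Q \<in> ?C"
        then obtain g where g: "g \<in> carrier S" and Qd: "Q = cjs S g P" unfolding scl by blast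
        have Qs: "subgroup Q S" using Qd cjs_subgroup g P by simp
        have QH: "Q \<in> \<H>" using assms(5) P(2) Fconj[OF P(1) g] Qd by blast
        have Qk: "card Q = k" using Qd cjs_card g subc P by simp
        have tQ: "t Q = t P"
          using t_E[of P Q] Fconj[OF P(1) g] Qd unfolding E_def by (simp add: r_into_rtranclp)
        have mQ: "vmark S X Q = vmark S X P" using Qd mark_conj P g by simp
        have CQ: "S_conj_class S Q = ?C"
        proof
          show "S_conj_class S Q \<subseteq> ?C"
          proof
            fix Z assume "Z \<in> S_conj_class S Q"
            then obtain h where h: "h \<in> carrier S" "Z = cjs S h Q" unfolding scl by blast
            then have "Z = cjs S (h \<otimes>\<^bsub>S\<^esub> g) P" using Qd cjs_comp g subc P by simp
            then show "Z \<in> ?C" unfolding scl using h g by blast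
          qed
          show "?C \<subseteq> S_conj_class S Q"
          proof
            fix Z assume "Z \<in> ?C"
            then obtain h where h: "h \<in> carrier S" "Z = cjs S h P" unfolding scl by blast
            have "cjs S (h \<otimes>\<^bsub>S\<^esub> inv\<^bsub>S\<^esub> g) Q = cjs S (h \<otimes>\<^bsub>S\<^esub> inv\<^bsub>S\<^esub> g \<otimes>\<^bsub>S\<^esub> g) P"
              using Qd cjs_comp g h subc P by simp
            also have "h \<otimes>\<^bsub>S\<^esub> inv\<^bsub>S\<^esub> g \<otimes>\<^bsub>S\<^esub> g = h" using g h by (simp add: m_assoc)
            finally have "Z = cjs S (h \<otimes>\<^bsub>S\<^esub> inv\<^bsub>S\<^esub> g) Q" using h by simp
            then show "Z \<in> S_conj_class S Q" unfolding scl using h g by blast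
          qed
        qed
        have fQ: "card (fixed_cosets S Q P) = card (fixed_cosets S Q Q)"
        proof -
          have "P = cjs S (inv\<^bsub>S\<^esub> g) Q" using Qd cjs_inv_cancel g subc P by simp
          then show ?thesis using fixed_cosets_conj_eq[OF fin Qs _ subc[OF Qs], of "inv\<^bsub>S\<^esub> g"] g by simp
        qed
        have fpos: "card (fixed_cosets S Q Q) > 0" using fixed_cosets_self_pos[OF fin Qs] .
        show "y Q * of_nat (card (fixed_cosets S Q P)) = ?v"
          unfolding y_def using QH Qk tQ mQ CQ fQ fpos by simp
      qed
      also have "\<dots> = t P - vmark S X P" using Cpos by simp
      finally show ?thesis .
    qed
    show ?thesis unfolding Good_def
    proof (intro exI[of _ X'] conjI allI impI)
      fix H show "X0 H \<le> X' H" using X1 y_nn[of H] unfolding X'_def by (meson add_increasing2)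
    next
      fix P assume "subgroup P S" "P \<notin> \<H>"
      then show "vmark S X' P = vmark S X0 P" using vm_add ya X2 by simp
    next
      fix P P' assume c: "F_conjugate F P P'" and PH: "P \<in> \<H>" and kP: "k \<le> card P"
      have Ps: "subgroup P S" "subgroup P' S" using Fsubg c by auto
      have P'H: "P' \<in> \<H>" using assms(5) PH c by blast
      have cc: "card P' = card P" using Fcard c by simp
      show "vmark S X' P = vmark S X' P'"
      proof (cases "card P = k")
        case True
        have "E P P'" unfolding E_def using c by (simp add: r_into_rtranclp)
        then show ?thesis using vm_add yc Ps PH P'H cc True t_E by simp
      next
        case False
        then have "Suc k \<le> card P" using kP by simp
        then show ?thesis using vm_add yb Ps cc X3 c PH by simp
      qed
    qed
  qed
  define N where "N = Suc (card (carrier S))"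
  have base: "Good N"
    unfolding Good_def
  proof (intro exI[of _ X0] conjI allI impI)
    fix P P' assume "F_conjugate F P P'" "P \<in> \<H>" "N \<le> card P"
    moreover have "card P \<le> card (carrier S)" using subH[OF \<open>P \<in> \<H>\<close>] subc card_mono fin by blast
    ultimately show "vmark S X0 P = vmark S X0 P'" unfolding N_def by simp
  qed auto
  have "Good (N - j)" for j
  proof (induction j)
    case 0 then show ?case using base by simp
  next
    case (Suc j)
    show ?case
    proof (cases "N - j = Suc (N - Suc j)")
      case True then show ?thesis using Suc step by simp
    next
      case False then have "N - Suc j = N - j" by simp
      then show ?thesis using Suc by simp
    qed
  qed
  from this[of N] obtain X where X1: "\<forall>H. X0 H \<le> X H"
    and X2: "\<forall>P. subgroup P S \<longrightarrow> P \<notin> \<H> \<longrightarrow> vmark S X P = vmark S X0 P"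
    and X3: "\<forall>P P'. F_conjugate F P P' \<longrightarrow> P \<in> \<H> \<longrightarrow> vmark S X P = vmark S X P'"
    unfolding Good_def by auto
  show ?thesis
  proof (intro exI[of _ X] conjI allI impI)
    fix P P' assume P: "subgroup P S" and P': "subgroup P' S" and c: "F_conjugate F P P'"
    show "vmark S X P = vmark S X P'"
    proof (cases "P \<in> \<H>")
      case True then show ?thesis using X3 c by blast
    next
      case False
      then have "P' \<notin> \<H>" using assms(5) Fsym[OF c] by blast
      then show ?thesis using X2 assms(6) P P' c False by metis
    qed
  next
    show "nonneg_virtual S (\<lambda>H. X H - X0 H)"
      unfolding nonneg_virtual_def vcoeff_def using X1 by (simp add: sum_nonneg)
  qed (use X2 in auto)
qed

end
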